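(* Let $\Lambda$ be a strongly connected finite $k$-graph, and suppose $v\in\Lambda^0$ and $m,n\in\mathbb{N}^k$ satisfy $\sigma^m(x)=\sigma^n(x)$ for all $x\in Z(v)$. Then: (1) $\sigma^m(x)=\sigma^n(x)$ for all $x\in\Lambda^\infty$. (2) For each $\mu\in\Lambda^m$ there is a unique $\theta_{m,n}(\mu)\in\Lambda^n$ such that $\mu x=\theta_{m,n}(\mu)x$ for all $x\in Z(s(\mu))$; the map $\theta_{m,n}:\Lambda^m\to\Lambda^n$ preserves range and source. (3) If $w\in\Lambda^0$ and $p\in\mathbb{N}^k$ also satisfy $\sigma^n(x)=\sigma^p(x)$ for all $x\in Z(w)$, then $\sigma^m(x)=\sigma^p(x)$ for all $x\in\Lambda^\infty$ and $\theta_{n,p}\circ\theta_{m,n}=\theta_{m,p}$. (4) Each $\theta_{m,m}$ is the identity of $\Lambda^m$, and each $\theta_{m,n}$ is a bijection with $\theta_{m,n}^{-1}=\theta_{n,m}$.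
   Context: A $k$-graph is a countable category $\Lambda$ with a functor $d:\Lambda\to\mathbb{N}^k$ such that whenever $d(\lambda)=m+n$ there are unique $\mu,\nu$ with $d(\mu)=m$, $d(\nu)=n$, $\lambda=\mu\nu$. $\Lambda^n=d^{-1}(n)$, $\Lambda^0$ = vertices, $r,s$ range and source. Standing convention: $\Lambda^{e_i}\neq\emptyset$ for each $i$. Finite: each $\Lambda^n$ finite; strongly connected: $v\Lambda w\neq\emptyset$ for all vertices. Infinite paths: $\Omega_k=\{(m,n)\in\mathbb{N}^k\times\mathbb{N}^k:m\le n\}$ is a $k$-graph with $r(m,n)=(m,m)$, $s(m,n)=(n,n)$, $(m,n)(n,p)=(m,p)$, $d(m,n)=n-m$; an infinite path is a degree-preserving functor $x:\Omega_k\to\Lambda$; $\Lambda^\infty$ their set; $r(x)=x(0,0)$; $\sigma^n(x)(p,q)=x(n+p,n+q)$; for $s(\lambda)=r(x)$, $\lambda x$ is the unique infinite path with $(\lambda x)(0,d(\lambda))=\lambda$ and $\sigma^{d(\lambda)}(\lambda x)=x$; $Z(\lambda)=\{x:x(0,d(\lambda))=\lambda\}$ (so $Z(v)=\{x:r(x)=v\}$). *)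

theory Defs
  imports Main "HOL-Library.Countable_Set"
begin

text \<open>Degrees live in N^k, rendered as functions 'k => nat for a finite index type 'k
  (so k = CARD('k)). Morphisms of the k-graph have type 'a; objects (vertices) are
  identified with identity morphisms.\<close>

record ('a, 'k) kgraph =
  Mor :: "'a set"
  rg  :: "'a \<Rightarrow> 'a"
  sc  :: "'a \<Rightarrow> 'a"
  cmp :: "'a \<Rightarrow> 'a \<Rightarrow> 'a"
  dg  :: "'a \<Rightarrow> 'k \<Rightarrow> nat"

definition dadd :: "('k \<Rightarrow> nat) \<Rightarrow> ('k \<Rightarrow> nat) \<Rightarrow> 'k \<Rightarrow> nat" where
  "dadd m n = (\<lambda>i. m i + n i)"

definition dsub :: "('k \<Rightarrow> nat) \<Rightarrow> ('k \<Rightarrow> nat) \<Rightarrow> 'k \<Rightarrow> nat" where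
  "dsub n m = (\<lambda>i. n i - m i)"

definition dzero :: "'k \<Rightarrow> nat" where "dzero = (\<lambda>i. 0)"

definition unitdeg :: "'k \<Rightarrow> 'k \<Rightarrow> nat" where
  "unitdeg i = (\<lambda>j. if j = i then 1 else 0)"

definition Lam :: "('a, 'k) kgraph \<Rightarrow> ('k \<Rightarrow> nat) \<Rightarrow> 'a set" where
  "Lam G n = {l \<in> Mor G. dg G l = n}"

definition vertices :: "('a, 'k) kgraph \<Rightarrow> 'a set" where
  "vertices G = {v \<in> Mor G. rg G v = v \<and> sc G v = v}"

definition kgraph :: "('a, 'k::finite) kgraph \<Rightarrow> bool" where
  "kgraph G \<longleftrightarrow>
     countable (Mor G) \<and>
     (\<forall>l\<in>Mor G. rg G l \<in> Mor G \<and> sc G l \<in> Mor G \<and>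
        rg G (rg G l) = rg G l \<and> sc G (rg G l) = rg G l \<and>
        rg G (sc G l) = sc G l \<and> sc G (sc G l) = sc G l \<and>
        cmp G (rg G l) l = l \<and> cmp G l (sc G l) = l) \<and>
     (\<forall>l\<in>Mor G. \<forall>l'\<in>Mor G. sc G l = rg G l' \<longrightarrow>
        cmp G l l' \<in> Mor G \<and> rg G (cmp G l l') = rg G l \<and> sc G (cmp G l l') = sc G l' \<and>
        dg G (cmp G l l') = dadd (dg G l) (dg G l')) \<and>
     (\<forall>a\<in>Mor G. \<forall>b\<in>Mor G. \<forall>c\<in>Mor G. sc G a = rg G b \<and> sc G b = rg G c \<longrightarrow>
        cmp G (cmp G a b) c = cmp G a (cmp G b c)) \<and>
     (\<forall>l\<in>Mor G. \<forall>m n. dg G l = dadd m n \<longrightarrow>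
        (\<exists>!p. fst p \<in> Mor G \<and> snd p \<in> Mor G \<and> sc G (fst p) = rg G (snd p) \<and>
              dg G (fst p) = m \<and> dg G (snd p) = n \<and> l = cmp G (fst p) (snd p))) \<and>
     (\<forall>i. Lam G (unitdeg i) \<noteq> {})"

definition finite_kgraph :: "('a, 'k) kgraph \<Rightarrow> bool" where
  "finite_kgraph G \<longleftrightarrow> (\<forall>n. finite (Lam G n))"

definition strongly_connected :: "('a, 'k) kgraph \<Rightarrow> bool" where
  "strongly_connected G \<longleftrightarrow>
     (\<forall>v\<in>vertices G. \<forall>w\<in>vertices G. \<exists>l\<in>Mor G. rg G l = v \<and> sc G l = w)"

text \<open>Infinite paths: degree-preserving functors Omega_k -> Lambda. A path is a function
  x m n defined on pairs m <= n (value undefined elsewhere); x m m is the image of the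
  object (m,m).\<close>

definition paths :: "('a, 'k::finite) kgraph \<Rightarrow> (('k \<Rightarrow> nat) \<Rightarrow> ('k \<Rightarrow> nat) \<Rightarrow> 'a) set" where
  "paths G = {x. (\<forall>m n. \<not> m \<le> n \<longrightarrow> x m n = undefined) \<and>
     (\<forall>m. x m m \<in> vertices G) \<and>
     (\<forall>m n. m \<le> n \<longrightarrow> x m n \<in> Mor G \<and> dg G (x m n) = dsub n m \<and>
              rg G (x m n) = x m m \<and> sc G (x m n) = x n n) \<and>
     (\<forall>m n p. m \<le> n \<and> n \<le> p \<longrightarrow> cmp G (x m n) (x n p) = x m p)}"

definition shift :: "('k \<Rightarrow> nat) \<Rightarrow> (('k \<Rightarrow> nat) \<Rightarrow> ('k \<Rightarrow> nat) \<Rightarrow> 'a)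
                      \<Rightarrow> (('k \<Rightarrow> nat) \<Rightarrow> ('k \<Rightarrow> nat) \<Rightarrow> 'a)" where
  "shift n x = (\<lambda>p q. x (dadd n p) (dadd n q))"

definition prange :: "(('k \<Rightarrow> nat) \<Rightarrow> ('k \<Rightarrow> nat) \<Rightarrow> 'a) \<Rightarrow> 'a" where
  "prange x = x dzero dzero"

definition cyl :: "('a, 'k::finite) kgraph \<Rightarrow> 'a \<Rightarrow> (('k \<Rightarrow> nat) \<Rightarrow> ('k \<Rightarrow> nat) \<Rightarrow> 'a) set" where
  "cyl G v = {x \<in> paths G. prange x = v}"

text \<open>Concatenation lambda x (meaningful when s(lambda) = r(x)).\<close>
definition pcat :: "('a, 'k::finite) kgraph \<Rightarrow> 'a \<Rightarrow> (('k \<Rightarrow> nat) \<Rightarrow> ('k \<Rightarrow> nat) \<Rightarrow> 'a)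
                     \<Rightarrow> (('k \<Rightarrow> nat) \<Rightarrow> ('k \<Rightarrow> nat) \<Rightarrow> 'a)" where
  "pcat G l x = (THE y. y \<in> paths G \<and> y dzero (dg G l) = l \<and> shift (dg G l) y = x)"

text \<open>theta_{m,n}(mu): the unique nu in Lambda^n with mu x = nu x for all x in Z(s(mu))
  (the equation being well-typed, i.e. s(nu) = r(x)).\<close>
definition theta :: "('a, 'k::finite) kgraph \<Rightarrow> ('k \<Rightarrow> nat) \<Rightarrow> ('k \<Rightarrow> nat) \<Rightarrow> 'a \<Rightarrow> 'a" where
  "theta G m n mu = (THE nu. nu \<in> Lam G n \<and>
      (\<forall>x\<in>cyl G (sc G mu). sc G nu = prange x \<and> pcat G mu x = pcat G nu x))"

end

theory Submission
  imports Defs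
begin

lemma dadd_comm: "dadd m n = dadd n m" by (auto simp: dadd_def fun_eq_iff)
lemma dadd_assoc: "dadd (dadd a b) c = dadd a (dadd b c)" by (auto simp: dadd_def fun_eq_iff)
lemma dadd_dsub: "m \<le> n \<Longrightarrow> dadd m (dsub n m) = n" by (auto simp: dadd_def dsub_def le_fun_def fun_eq_iff)
lemma dsub_dadd[simp]: "dsub (dadd m n) m = n" by (auto simp: dadd_def dsub_def fun_eq_iff)
lemma dadd_zero[simp]: "dadd dzero n = n" "dadd n dzero = n" by (auto simp: dadd_def dzero_def fun_eq_iff)
lemma dsub_zero[simp]: "dsub n dzero = n" "dsub n n = dzero" by (auto simp: dsub_def dzero_def fun_eq_iff)
lemma dzero_le[simp]: "dzero \<le> n" by (auto simp: dzero_def le_fun_def)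
lemma le_dadd[simp]: "m \<le> dadd m n" "n \<le> dadd m n" by (auto simp: dadd_def le_fun_def)
lemma dadd_le_iff[simp]: "dadd a p \<le> dadd a q \<longleftrightarrow> p \<le> q" by (auto simp: dadd_def le_fun_def)
lemma dadd_self: "dadd a n = n \<Longrightarrow> a = dzero" by (auto simp: dadd_def fun_eq_iff dzero_def)
lemma dsub_dsub: "d \<le> D \<Longrightarrow> dsub D (dsub D d) = d" by (auto simp: dsub_def le_fun_def fun_eq_iff)
lemma dsub_dadd2: "dsub (dadd a q) (dadd a p) = dsub q p" by (auto simp: dadd_def dsub_def fun_eq_iff)
lemma dsub_le: "dsub D d \<le> D" by (auto simp: dsub_def le_fun_def)

definition fac :: "('a,'k) kgraph \<Rightarrow> 'a \<Rightarrow> ('k\<Rightarrow>nat) \<Rightarrow> 'a \<times> 'a" where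
  "fac G l q = (THE p. fst p \<in> Mor G \<and> snd p \<in> Mor G \<and> sc G (fst p) = rg G (snd p) \<and>
      dg G (fst p) = q \<and> dg G (snd p) = dsub (dg G l) q \<and> l = cmp G (fst p) (snd p))"
definition "pre G l q = fst (fac G l q)"
definition "suf G l q = snd (fac G l q)"

definition mkp :: "('a,'k) kgraph \<Rightarrow> (('k\<Rightarrow>nat) \<Rightarrow> 'a) \<Rightarrow> ('k\<Rightarrow>nat) \<Rightarrow> ('k\<Rightarrow>nat) \<Rightarrow> 'a" where
 "mkp G f = (\<lambda>p q. if p \<le> q then suf G (f q) p else undefined)"

locale KG =
  fixes G :: "('a,'k::finite) kgraph"
  assumes kg: "kgraph G" and sconn: "strongly_connected G"
begin

lemma mor_basic:
  assumes "l \<in> Mor G"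
  shows "rg G l \<in> Mor G" "sc G l \<in> Mor G" "rg G (rg G l) = rg G l" "sc G (rg G l) = rg G l"
   "rg G (sc G l) = sc G l" "sc G (sc G l) = sc G l" "cmp G (rg G l) l = l" "cmp G l (sc G l) = l"
proof -
  have "\<forall>l\<in>Mor G. rg G l \<in> Mor G \<and> sc G l \<in> Mor G \<and>
        rg G (rg G l) = rg G l \<and> sc G (rg G l) = rg G l \<and>
        rg G (sc G l) = sc G l \<and> sc G (sc G l) = sc G l \<and>
        cmp G (rg G l) l = l \<and> cmp G l (sc G l) = l" using kg unfolding kgraph_def by blast
  then show "rg G l \<in> Mor G" "sc G l \<in> Mor G" "rg G (rg G l) = rg G l" "sc G (rg G l) = rg G l"
   "rg G (sc G l) = sc G l" "sc G (sc G l) = sc G l" "cmp G (rg G l) l = l" "cmp G l (sc G l) = l"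
    using assms by auto
qed

lemma cmp_props:
  assumes "a \<in> Mor G" "b \<in> Mor G" "sc G a = rg G b"
  shows "cmp G a b \<in> Mor G" "rg G (cmp G a b) = rg G a" "sc G (cmp G a b) = sc G b"
    "dg G (cmp G a b) = dadd (dg G a) (dg G b)"
proof -
  have "\<forall>l\<in>Mor G. \<forall>l'\<in>Mor G. sc G l = rg G l' \<longrightarrow>
        cmp G l l' \<in> Mor G \<and> rg G (cmp G l l') = rg G l \<and> sc G (cmp G l l') = sc G l' \<and>
        dg G (cmp G l l') = dadd (dg G l) (dg G l')" using kg unfolding kgraph_def by blast
  then show "cmp G a b \<in> Mor G" "rg G (cmp G a b) = rg G a" "sc G (cmp G a b) = sc G b"
    "dg G (cmp G a b) = dadd (dg G a) (dg G b)" using assms by auto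
qed

lemma assoc:
  assumes "a \<in> Mor G" "b \<in> Mor G" "c \<in> Mor G" "sc G a = rg G b" "sc G b = rg G c"
  shows "cmp G (cmp G a b) c = cmp G a (cmp G b c)"
proof -
  have "\<forall>a\<in>Mor G. \<forall>b\<in>Mor G. \<forall>c\<in>Mor G. sc G a = rg G b \<and> sc G b = rg G c \<longrightarrow>
        cmp G (cmp G a b) c = cmp G a (cmp G b c)" using kg unfolding kgraph_def by blast
  then show ?thesis using assms by blast
qed

lemma factor_ex1:
  assumes "l \<in> Mor G" "dg G l = dadd m n"
  shows "\<exists>!p. fst p \<in> Mor G \<and> snd p \<in> Mor G \<and> sc G (fst p) = rg G (snd p) \<and>
              dg G (fst p) = m \<and> dg G (snd p) = n \<and> l = cmp G (fst p) (snd p)"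
proof -
  have "\<forall>l\<in>Mor G. \<forall>m n. dg G l = dadd m n \<longrightarrow>
        (\<exists>!p. fst p \<in> Mor G \<and> snd p \<in> Mor G \<and> sc G (fst p) = rg G (snd p) \<and>
              dg G (fst p) = m \<and> dg G (snd p) = n \<and> l = cmp G (fst p) (snd p))"
    using kg unfolding kgraph_def by blast
  then show ?thesis using assms by blast
qed

lemma units: "Lam G (unitdeg i) \<noteq> {}" using kg unfolding kgraph_def by blast

lemma fac1:
  assumes "l \<in> Mor G" "q \<le> dg G l"
  shows "pre G l q \<in> Mor G" "suf G l q \<in> Mor G" "sc G (pre G l q) = rg G (suf G l q)"
    "dg G (pre G l q) = q" "dg G (suf G l q) = dsub (dg G l) q" "cmp G (pre G l q) (suf G l q) = l"
proof -
  have "dg G l = dadd q (dsub (dg G l) q)" using assms(2) by (simp add: dadd_dsub)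
  from theI'[OF factor_ex1[OF assms(1) this]]
  have h: "fst (fac G l q) \<in> Mor G \<and> snd (fac G l q) \<in> Mor G \<and> sc G (fst (fac G l q)) = rg G (snd (fac G l q)) \<and>
      dg G (fst (fac G l q)) = q \<and> dg G (snd (fac G l q)) = dsub (dg G l) q \<and> l = cmp G (fst (fac G l q)) (snd (fac G l q))"
    unfolding fac_def .
  then show "pre G l q \<in> Mor G" "suf G l q \<in> Mor G" "sc G (pre G l q) = rg G (suf G l q)"
    "dg G (pre G l q) = q" "dg G (suf G l q) = dsub (dg G l) q" "cmp G (pre G l q) (suf G l q) = l"
    unfolding pre_def suf_def by auto
qed

lemma fac_rs:
  assumes "l \<in> Mor G" "q \<le> dg G l"
  shows "rg G (pre G l q) = rg G l" "sc G (suf G l q) = sc G l"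
proof -
  note h = fac1[OF assms]
  have "rg G (cmp G (pre G l q) (suf G l q)) = rg G (pre G l q)"
     "sc G (cmp G (pre G l q) (suf G l q)) = sc G (suf G l q)"
    using cmp_props[OF h(1,2,3)] by auto
  then show "rg G (pre G l q) = rg G l" "sc G (suf G l q) = sc G l" unfolding h(6) by auto
qed

lemma fac2:
  assumes "a \<in> Mor G" "b \<in> Mor G" "sc G a = rg G b" "dg G a = q"
  shows "pre G (cmp G a b) q = a" "suf G (cmp G a b) q = b"
proof -
  let ?l = "cmp G a b"
  have l: "?l \<in> Mor G" and d: "dg G ?l = dadd q (dg G b)" using cmp_props[OF assms(1-3)] assms(4) by auto
  have db: "dsub (dg G ?l) q = dg G b" using d by simp
  have d2: "dg G ?l = dadd q (dsub (dg G ?l) q)" using d db by simp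
  have "fac G ?l q = (a,b)" unfolding fac_def
    by (rule the1_equality[OF factor_ex1[OF l d2]]) (use assms db in simp)
  then show "pre G (cmp G a b) q = a" "suf G (cmp G a b) q = b" unfolding pre_def suf_def by auto
qed

lemma vert_rg: "l \<in> Mor G \<Longrightarrow> rg G l \<in> vertices G" "l \<in> Mor G \<Longrightarrow> sc G l \<in> vertices G"
  using mor_basic by (auto simp: vertices_def)

lemma vert_mor: "v \<in> vertices G \<Longrightarrow> v \<in> Mor G" "v \<in> vertices G \<Longrightarrow> rg G v = v"
   "v \<in> vertices G \<Longrightarrow> sc G v = v"
  by (auto simp: vertices_def)

lemma dg_vertex: assumes "v \<in> vertices G" shows "dg G v = dzero"
proof -
  have v: "v \<in> Mor G" "rg G v = v" "sc G v = v" using assms by (auto simp: vertices_def)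
  have "cmp G v v = v" using mor_basic(7)[OF v(1)] v by simp
  then have "dadd (dg G v) (dg G v) = dg G v" using cmp_props(4)[of v v] v by simp
  then show ?thesis by (rule dadd_self)
qed

lemma dg_rs: "l \<in> Mor G \<Longrightarrow> dg G (rg G l) = dzero" "l \<in> Mor G \<Longrightarrow> dg G (sc G l) = dzero"
  using dg_vertex vert_rg by auto

lemma pre_full: assumes "l \<in> Mor G" shows "pre G l (dg G l) = l" "suf G l (dg G l) = sc G l"
  using fac2[of l "sc G l" "dg G l"] mor_basic[OF assms] assms by auto

lemma pre_zero: assumes "l \<in> Mor G" shows "pre G l dzero = rg G l" "suf G l dzero = l"
  using fac2[of "rg G l" l dzero] mor_basic[OF assms] dg_rs[OF assms] assms by auto

lemma deg0: assumes "l \<in> Mor G" "dg G l = dzero" shows "rg G l = l"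
proof -
  have "pre G l dzero = rg G l" "pre G l (dg G l) = l" using pre_zero[OF assms(1)] pre_full[OF assms(1)] by auto
  then show ?thesis using assms(2) by simp
qed

lemma pre_pre_suf:
  assumes "l \<in> Mor G" "p \<le> q" "q \<le> dg G l"
  shows "pre G (pre G l q) p = pre G l p"
    "cmp G (suf G (pre G l q) p) (suf G l q) = suf G l p"
proof -
  let ?A = "pre G l q" and ?C = "suf G l q"
  note h = fac1[OF assms(1,3)]
  have pq: "p \<le> dg G ?A" using h assms by simp
  note h2 = fac1[OF h(1) pq]
  let ?a = "pre G ?A p" and ?b = "suf G ?A p"
  have e: "cmp G (cmp G ?a ?b) ?C = l" using h(6) h2(6) by simp
  have rb: "rg G ?C = sc G ?b" using h(3) fac_rs(2)[OF h(1) pq] by simp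
  have e2: "cmp G ?a (cmp G ?b ?C) = l" using e assoc[of ?a ?b ?C] h h2 rb by simp
  have m: "cmp G ?b ?C \<in> Mor G" "rg G (cmp G ?b ?C) = rg G ?b" using cmp_props[of ?b ?C] h h2 rb by auto
  have "pre G l p = ?a" "suf G l p = cmp G ?b ?C"
    using fac2[of ?a "cmp G ?b ?C" p] m h2 e2 by auto
  then show "pre G (pre G l q) p = pre G l p"
    "cmp G (suf G (pre G l q) p) (suf G l q) = suf G l p" by auto
qed

lemma pre_cmp:
  assumes "a \<in> Mor G" "b \<in> Mor G" "sc G a = rg G b" "q \<le> dg G a"
  shows "pre G (cmp G a b) q = pre G a q"
proof -
  note h = fac1[OF assms(1,4)]
  have r: "sc G (suf G a q) = rg G b" using fac_rs[OF assms(1,4)] assms by simp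
  have e: "cmp G a b = cmp G (pre G a q) (cmp G (suf G a q) b)"
    using assoc[of "pre G a q" "suf G a q" b] h r assms by simp
  show ?thesis using fac2[of "pre G a q" "cmp G (suf G a q) b" q] e cmp_props[of "suf G a q" b] h r assms
    by auto
qed

lemma path_props:
  assumes "x \<in> paths G"
  shows "\<And>m n. \<not> m \<le> n \<Longrightarrow> x m n = undefined"
    "\<And>m. x m m \<in> vertices G"
    "\<And>m n. m \<le> n \<Longrightarrow> x m n \<in> Mor G"
    "\<And>m n. m \<le> n \<Longrightarrow> dg G (x m n) = dsub n m"
    "\<And>m n. m \<le> n \<Longrightarrow> rg G (x m n) = x m m"
    "\<And>m n. m \<le> n \<Longrightarrow> sc G (x m n) = x n n"
    "\<And>m n p. m \<le> n \<Longrightarrow> n \<le> p \<Longrightarrow> cmp G (x m n) (x n p) = x m p"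
  using assms unfolding paths_def by auto

lemma path_seg:
  assumes "x \<in> paths G" "p \<le> q"
  shows "x p q = suf G (x dzero q) p" "pre G (x dzero q) p = x dzero p"
proof -
  have "x dzero q = cmp G (x dzero p) (x p q)" using path_props(7)[OF assms(1), of dzero p q] assms by simp
  then show "x p q = suf G (x dzero q) p" "pre G (x dzero q) p = x dzero p"
    using fac2[of "x dzero p" "x p q" p] path_props[OF assms(1)] assms(2) by auto
qed

lemma path_eq:
  assumes "x \<in> paths G" "y \<in> paths G" "\<And>q. x dzero q = y dzero q"
  shows "x = y"
proof (intro ext)
  fix p q
  show "x p q = y p q"
  proof (cases "p \<le> q")
    case True
    have "x p q = suf G (x dzero q) p" "y p q = suf G (y dzero q) p"
      using path_seg(1)[OF assms(1) True] path_seg(1)[OF assms(2) True] by auto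
    then show ?thesis using assms(3)[of q] by simp
  next
    case False
    then show ?thesis using path_props(1)[OF assms(1) False] path_props(1)[OF assms(2) False] by simp
  qed
qed

lemma mkp_path:
  assumes f: "\<And>q. f q \<in> Mor G" "\<And>q. dg G (f q) = q"
    and cons: "\<And>q q'. q \<le> q' \<Longrightarrow> pre G (f q') q = f q"
  shows "mkp G f \<in> paths G" "\<And>q. mkp G f dzero q = f q"
proof -
  show "\<And>q. mkp G f dzero q = f q" unfolding mkp_def using pre_zero f by simp
  have A: "mkp G f m m = sc G (f m)" for m
  proof -
    have "suf G (f m) (dg G (f m)) = sc G (f m)" using pre_full(2)[OF f(1)] .
    then show ?thesis unfolding mkp_def using f(2)[of m] by simp
  qed
  have c1: "\<forall>m n. \<not> m \<le> n \<longrightarrow> mkp G f m n = undefined" unfolding mkp_def by simp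
  have c2: "\<forall>m. mkp G f m m \<in> vertices G" using A vert_rg(2)[OF f(1)] by simp
  have c3: "\<forall>m n. m \<le> n \<longrightarrow> mkp G f m n \<in> Mor G \<and> dg G (mkp G f m n) = dsub n m \<and>
              rg G (mkp G f m n) = mkp G f m m \<and> sc G (mkp G f m n) = mkp G f n n"
  proof (intro allI impI)
    fix m n :: "'k \<Rightarrow> nat"
    assume mn: "m \<le> n"
    have mn': "m \<le> dg G (f n)" using f mn by simp
    note h = fac1[OF f(1) mn']
    have r1: "rg G (suf G (f n) m) = sc G (f m)" using h(3) cons[OF mn] by simp
    have r2: "sc G (suf G (f n) m) = sc G (f n)" using fac_rs[OF f(1) mn'] by simp
    show "mkp G f m n \<in> Mor G \<and> dg G (mkp G f m n) = dsub n m \<and>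
              rg G (mkp G f m n) = mkp G f m m \<and> sc G (mkp G f m n) = mkp G f n n"
      using h mn f r1 r2 A unfolding mkp_def by simp
  qed
  have c4: "\<forall>m n p. m \<le> n \<and> n \<le> p \<longrightarrow> cmp G (mkp G f m n) (mkp G f n p) = mkp G f m p"
  proof (intro allI impI)
    fix m n p :: "'k \<Rightarrow> nat"
    assume a: "m \<le> n \<and> n \<le> p"
    have np: "n \<le> dg G (f p)" using f a by simp
    have "cmp G (suf G (pre G (f p) n) m) (suf G (f p) n) = suf G (f p) m"
      using pre_pre_suf(2)[OF f(1), of m n p] a np by simp
    moreover have "pre G (f p) n = f n" using cons a by simp
    moreover have "m \<le> p" using a order_trans by blast
    ultimately show "cmp G (mkp G f m n) (mkp G f n p) = mkp G f m p" using a unfolding mkp_def by simp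
  qed
  show "mkp G f \<in> paths G"
    unfolding paths_def mem_Collect_eq by (intro conjI c1 c2 c3 c4)
qed

lemma sconn': "v \<in> vertices G \<Longrightarrow> w \<in> vertices G \<Longrightarrow> \<exists>l\<in>Mor G. rg G l = v \<and> sc G l = w"
  using sconn unfolding strongly_connected_def by blast

lemma loop1:
  assumes "finite S"
  shows "u \<in> vertices G \<Longrightarrow> \<exists>l\<in>Mor G. rg G l = u \<and> sc G l = u \<and> (\<forall>i\<in>S. 1 \<le> dg G l i)"
  using assms
proof (induction S arbitrary: u rule: finite_induct)
  case empty
  then show ?case using vert_mor[of u] by auto
next
  case (insert j S)
  obtain l where l: "l \<in> Mor G" "rg G l = u" "sc G l = u" "\<forall>i\<in>S. 1 \<le> dg G l i"
    using insert by blast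
  obtain e where e: "e \<in> Mor G" "dg G e = unitdeg j" using units[of j] unfolding Lam_def by blast
  obtain l1 where l1: "l1 \<in> Mor G" "rg G l1 = u" "sc G l1 = rg G e"
    using sconn'[OF insert(4) vert_rg(1)[OF e(1)]] by blast
  obtain l2 where l2: "l2 \<in> Mor G" "rg G l2 = sc G e" "sc G l2 = u"
    using sconn'[OF vert_rg(2)[OF e(1)] insert(4)] by blast
  note c1 = cmp_props[of e l2]
  note c2 = cmp_props[of l1 "cmp G e l2"]
  note c3 = cmp_props[of l "cmp G l1 (cmp G e l2)"]
  let ?L = "cmp G l (cmp G l1 (cmp G e l2))"
  have L: "?L \<in> Mor G" "rg G ?L = u" "sc G ?L = u"
    "dg G ?L = dadd (dg G l) (dadd (dg G l1) (dadd (unitdeg j) (dg G l2)))"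
    using c1 c2 c3 l l1 l2 e by auto
  have "\<forall>i\<in>insert j S. 1 \<le> dg G ?L i"
    using L(4) l(4) by (auto simp: dadd_def unitdeg_def)
  then show ?case using L by blast
qed

lemma loopN:
  assumes "u \<in> vertices G"
  shows "\<exists>l\<in>Mor G. rg G l = u \<and> sc G l = u \<and> (\<forall>i. N \<le> dg G l i)"
proof (induction N)
  case 0
  then show ?case using vert_mor[OF assms] by auto
next
  case (Suc N)
  then obtain l where l: "l \<in> Mor G" "rg G l = u" "sc G l = u" "\<forall>i. N \<le> dg G l i" by blast
  obtain l1 where l1: "l1 \<in> Mor G" "rg G l1 = u" "sc G l1 = u" "\<forall>i\<in>UNIV. 1 \<le> dg G l1 i"
    using loop1[OF finite_UNIV assms] by blast
  have L: "cmp G l l1 \<in> Mor G" "rg G (cmp G l l1) = u" "sc G (cmp G l l1) = u"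
     "dg G (cmp G l l1) = dadd (dg G l) (dg G l1)"
    using cmp_props[of l l1] l l1 by auto
  have "\<forall>i. Suc N \<le> dg G (cmp G l l1) i"
  proof
    fix i
    have "N \<le> dg G l i" "1 \<le> dg G l1 i" using l(4) l1(4) by auto
    then show "Suc N \<le> dg G (cmp G l l1) i" using L(4) by (simp add: dadd_def)
  qed
  then show ?case using L by blast
qed

lemma big_loop:
  assumes "u \<in> vertices G"
  shows "\<exists>L\<in>Mor G. rg G L = u \<and> sc G L = u \<and> d \<le> dg G L"
proof -
  obtain L where L: "L \<in> Mor G" "rg G L = u" "sc G L = u" "\<forall>i. Max (range d) \<le> dg G L i"
    using loopN[OF assms] by blast
  have "d \<le> dg G L" unfolding le_fun_def
  proof
    fix i
    have "d i \<le> Max (range d)" by (rule Max_ge) auto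
    then show "d i \<le> dg G L i" using L(4) order_trans by blast
  qed
  then show ?thesis using L by blast
qed

lemma ex_rg:
  assumes "u \<in> vertices G"
  shows "\<exists>l\<in>Mor G. rg G l = u \<and> dg G l = d"
proof -
  obtain L where L: "L \<in> Mor G" "rg G L = u" "d \<le> dg G L" using big_loop[OF assms] by blast
  show ?thesis using fac1[OF L(1) L(3)] fac_rs[OF L(1) L(3)] L by blast
qed

lemma ex_sc:
  assumes "u \<in> vertices G"
  shows "\<exists>l\<in>Mor G. sc G l = u \<and> dg G l = d"
proof -
  obtain L where L: "L \<in> Mor G" "sc G L = u" "d \<le> dg G L" using big_loop[OF assms] by blast
  have le: "dsub (dg G L) d \<le> dg G L" by (rule dsub_le)
  show ?thesis using fac1[OF L(1) le] fac_rs[OF L(1) le] L dsub_dsub[OF L(3)] by metis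
qed

lemma cyl_ne:
  assumes u: "u \<in> vertices G"
  shows "\<exists>x. x \<in> cyl G u"
proof -
  define E where "E = (\<lambda>c. SOME e. e \<in> Mor G \<and> rg G e = sc G c \<and> dg G e = (\<lambda>i::'k. 1::nat))"
  define ch where "ch = rec_nat u (\<lambda>N c. cmp G c (E c))"
  have ch0: "ch 0 = u" and chS: "\<And>N. ch (Suc N) = cmp G (ch N) (E (ch N))" by (simp_all add: ch_def)
  have Ep: "E c \<in> Mor G \<and> rg G (E c) = sc G c \<and> dg G (E c) = (\<lambda>i::'k. 1::nat)" if "c \<in> Mor G" for c
  proof -
    have "\<exists>e. e \<in> Mor G \<and> rg G e = sc G c \<and> dg G e = (\<lambda>i::'k. 1::nat)"
      using ex_rg[OF vert_rg(2)[OF that]] by blast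
    then show ?thesis unfolding E_def by (rule someI_ex)
  qed
  have inv: "ch N \<in> Mor G \<and> rg G (ch N) = u \<and> dg G (ch N) = (\<lambda>i. N)" for N
  proof (induction N)
    case 0
    then show ?case using ch0 vert_mor[OF u] dg_vertex[OF u] by (simp add: dzero_def)
  next
    case (Suc N)
    have e: "E (ch N) \<in> Mor G" "rg G (E (ch N)) = sc G (ch N)" "dg G (E (ch N)) = (\<lambda>i. 1)"
      using Ep Suc by auto
    show ?case using cmp_props[of "ch N" "E (ch N)"] e Suc unfolding chS by (auto simp: dadd_def)
  qed
  have step: "pre G (ch (Suc N)) (\<lambda>i. N) = ch N" for N
    unfolding chS using fac2(1)[of "ch N" "E (ch N)" "\<lambda>i. N"] inv Ep by auto
  have chain: "pre G (ch N') (\<lambda>i. N) = ch N" if "N \<le> N'" for N N'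
    using that
  proof (induction N' rule: dec_induct)
    case base
    then show ?case using pre_full(1)[of "ch N"] inv by auto
  next
    case (step N')
    have "pre G (pre G (ch (Suc N')) (\<lambda>i. N')) (\<lambda>i. N) = pre G (ch (Suc N')) (\<lambda>i. N)"
      by (rule pre_pre_suf(1)) (use inv step(1) in \<open>auto simp: le_fun_def\<close>)
    then show ?case using step \<open>\<And>N. pre G (ch (Suc N)) (\<lambda>i. N) = ch N\<close> by simp
  qed
  define M where "M = (\<lambda>q::'k\<Rightarrow>nat. Max (range q))"
  have qM: "q \<le> (\<lambda>i. M q)" for q unfolding M_def le_fun_def by (auto intro: Max_ge)
  have Mmono: "M q \<le> M q'" if "q \<le> q'" for q q'
  proof -
    have "M q \<in> range q" unfolding M_def by (rule Max_in) auto
    then obtain i where "M q = q i" by auto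
    then show ?thesis using that qM[of q'] unfolding le_fun_def by (metis order_trans)
  qed
  define f where "f = (\<lambda>q. pre G (ch (M q)) q)"
  have fq: "f q \<in> Mor G" "dg G (f q) = q" for q
    unfolding f_def using fac1[of "ch (M q)" q] inv qM by auto
  have cons: "pre G (f q') q = f q" if "q \<le> q'" for q q'
  proof -
    have a: "pre G (f q') q = pre G (ch (M q')) q"
      unfolding f_def by (rule pre_pre_suf(1)) (use inv qM that in auto)
    have b: "pre G (pre G (ch (M q')) (\<lambda>i. M q)) q = pre G (ch (M q')) q"
      by (rule pre_pre_suf(1)) (use inv qM Mmono[OF that] in \<open>auto simp: le_fun_def\<close>)
    show ?thesis using a b chain[OF Mmono[OF that]] unfolding f_def by simp
  qed
  have P: "mkp G f \<in> paths G" "\<And>q. mkp G f dzero q = f q" using mkp_path[OF fq cons] by auto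
  have p0: "prange (mkp G f) = f dzero" unfolding prange_def by (rule P(2))
  have "f dzero = u" unfolding f_def using pre_zero(1)[of "ch (M dzero)"] inv by auto
  then have "prange (mkp G f) = u" using p0 by simp
  then show ?thesis using P unfolding cyl_def by blast
qed

lemma shift_app: "shift n x p q = x (dadd n p) (dadd n q)" by (simp add: shift_def)

lemma shift_path:
  assumes x: "x \<in> paths G" shows "shift n x \<in> paths G"
proof -
  note P = path_props[OF x]
  have c1: "\<forall>m q. \<not> m \<le> q \<longrightarrow> shift n x m q = undefined" using P(1) by (simp add: shift_app)
  have c2: "\<forall>m. shift n x m m \<in> vertices G" using P(2) by (simp add: shift_app)
  have c3: "\<forall>m q. m \<le> q \<longrightarrow> shift n x m q \<in> Mor G \<and> dg G (shift n x m q) = dsub q m \<and>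
              rg G (shift n x m q) = shift n x m m \<and> sc G (shift n x m q) = shift n x q q"
    using P(3-6) by (simp add: shift_app dsub_dadd2)
  have c4: "\<forall>m q p. m \<le> q \<and> q \<le> p \<longrightarrow> cmp G (shift n x m q) (shift n x q p) = shift n x m p"
    using P(7) by (simp add: shift_app)
  show ?thesis unfolding paths_def mem_Collect_eq by (intro conjI c1 c2 c3 c4)
qed

lemma shift_shift: "shift a (shift b x) = shift (dadd b a) x"
  by (simp add: shift_def dadd_assoc)

lemma prange_shift: "prange (shift n x) = x n n"
  by (simp add: prange_def shift_app)

lemma cmp_path:
  assumes x: "x \<in> paths G" and l: "l \<in> Mor G" "sc G l = x dzero dzero" and pq: "p \<le> q"
  shows "cmp G l (x dzero q) = cmp G (cmp G l (x dzero p)) (x p q)"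
    "cmp G l (x dzero q) \<in> Mor G" "dg G (cmp G l (x dzero q)) = dadd (dg G l) q"
    "rg G (cmp G l (x dzero q)) = rg G l"
proof -
  note P = path_props[OF x]
  have a: "x dzero q = cmp G (x dzero p) (x p q)" using P(7)[of dzero p q] pq by simp
  have r: "sc G (x dzero p) = rg G (x p q)" using P(5,6) pq by simp
  show "cmp G l (x dzero q) = cmp G (cmp G l (x dzero p)) (x p q)"
    unfolding a using assoc[of l "x dzero p" "x p q"] P(3,5) l r pq by simp
  show "cmp G l (x dzero q) \<in> Mor G" "dg G (cmp G l (x dzero q)) = dadd (dg G l) q"
    "rg G (cmp G l (x dzero q)) = rg G l"
    using cmp_props[of l "x dzero q"] P(3,4,5) l by auto
qed

lemma path_init:
  assumes y: "y \<in> paths G" and l: "y dzero (dg G l) = l" and s: "shift (dg G l) y = x"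
  shows "y dzero q = pre G (cmp G l (x dzero q)) q"
proof -
  let ?d = "dg G l"
  note P = path_props[OF y]
  have "y dzero (dadd ?d q) = cmp G (y dzero ?d) (y ?d (dadd ?d q))" using P(7)[of dzero ?d "dadd ?d q"] by simp
  moreover have "y ?d (dadd ?d q) = x dzero q" using s shift_app[of ?d y dzero q] by simp
  ultimately have "y dzero (dadd ?d q) = cmp G l (x dzero q)" using l by simp
  then show ?thesis using path_seg(2)[OF y, of q "dadd ?d q"] by simp
qed

lemma pcat_ex:
  assumes l: "l \<in> Mor G" and x: "x \<in> paths G" and s: "sc G l = prange x"
  shows "\<exists>y. y \<in> paths G \<and> y dzero (dg G l) = l \<and> shift (dg G l) y = x"
proof -
  let ?d = "dg G l"
  have s': "sc G l = x dzero dzero" using s by (simp add: prange_def)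
  define X where "X = (\<lambda>q. cmp G l (x dzero q))"
  note XP = cmp_path[OF x l(1) s']
  have Xs: "X q = cmp G (X p) (x p q)" if "p \<le> q" for p q unfolding X_def using XP(1)[OF that] .
  have Xm: "X q \<in> Mor G" "dg G (X q) = dadd ?d q" for q unfolding X_def using XP(2,3)[of q q] by auto
  define f where "f = (\<lambda>q. pre G (X q) q)"
  have fq: "f q \<in> Mor G" "dg G (f q) = q" for q unfolding f_def using fac1[OF Xm(1), of q] Xm(2) by auto
  have sX: "sc G (X p) = x p p" for p
  proof -
    have "x dzero p \<in> Mor G" "rg G (x dzero p) = x dzero dzero" "sc G (x dzero p) = x p p"
      using path_props(3,5,6)[OF x, of dzero p] by auto
    then show ?thesis unfolding X_def using cmp_props(3)[of l "x dzero p"] l s' by simp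
  qed
  have xpq: "x p q \<in> Mor G" "rg G (x p q) = sc G (X p)" if "p \<le> q" for p q
    using path_props(3,5)[OF x that] sX by auto
  have cons: "pre G (f q') q = f q" if "q \<le> q'" for q q'
  proof -
    have "pre G (f q') q = pre G (X q') q"
      unfolding f_def by (rule pre_pre_suf(1)) (use Xm that in auto)
    also have "\<dots> = pre G (cmp G (X q) (x q q')) q" using Xs[OF that] by simp
    also have "\<dots> = pre G (X q) q" by (rule pre_cmp) (use Xm xpq[OF that] in auto)
    finally show ?thesis unfolding f_def .
  qed
  note M = mkp_path[OF fq cons]
  have y00: "mkp G f dzero ?d = f ?d" by (rule M(2))
  have y0: "mkp G f dzero ?d = l"
    using y00 fac2(1)[of l "x dzero ?d" ?d] l path_props(3,5)[OF x, of dzero ?d] s' by (simp add: f_def X_def)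
  have sh: "shift ?d (mkp G f) = x"
  proof (intro ext)
    fix p q
    show "shift ?d (mkp G f) p q = x p q"
    proof (cases "p \<le> q")
      case True
      have "pre G (X (dadd ?d q)) (dadd ?d q) = X q"
        using Xs[of q "dadd ?d q"] fac2(1)[of "X q" "x q (dadd ?d q)" "dadd ?d q"] Xm xpq[of q "dadd ?d q"] by simp
      moreover have "suf G (X q) (dadd ?d p) = x p q"
        using Xs[OF True] fac2(2)[of "X p" "x p q" "dadd ?d p"] Xm xpq[OF True] by simp
      ultimately show ?thesis using True unfolding shift_app mkp_def f_def by simp
    next
      case False
      then show ?thesis using path_props(1)[OF x False] unfolding shift_app mkp_def by simp
    qed
  qed
  show ?thesis using M y0 sh by blast
qed

lemma pcat_ex1:
  assumes l: "l \<in> Mor G" and x: "x \<in> paths G" and s: "sc G l = prange x"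
  shows "\<exists>!y. y \<in> paths G \<and> y dzero (dg G l) = l \<and> shift (dg G l) y = x"
proof (rule ex_ex1I)
  show "\<exists>y. y \<in> paths G \<and> y dzero (dg G l) = l \<and> shift (dg G l) y = x" by (rule pcat_ex[OF assms])
next
  fix y y' assume y: "y \<in> paths G \<and> y dzero (dg G l) = l \<and> shift (dg G l) y = x"
    and y': "y' \<in> paths G \<and> y' dzero (dg G l) = l \<and> shift (dg G l) y' = x"
  show "y = y'"
    by (rule path_eq) (use y y' path_init[of y l x] path_init[of y' l x] in auto)
qed

lemma pcat_props:
  assumes l: "l \<in> Mor G" and x: "x \<in> paths G" and s: "sc G l = prange x"
  shows "pcat G l x \<in> paths G" "pcat G l x dzero (dg G l) = l" "shift (dg G l) (pcat G l x) = x"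
proof -
  have h: "pcat G l x \<in> paths G \<and> pcat G l x dzero (dg G l) = l \<and> shift (dg G l) (pcat G l x) = x"
    unfolding pcat_def by (rule theI'[OF pcat_ex1[OF assms]])
  then show "pcat G l x \<in> paths G" "pcat G l x dzero (dg G l) = l" "shift (dg G l) (pcat G l x) = x" by auto
qed

lemma pcat_unique:
  assumes l: "l \<in> Mor G" and x: "x \<in> paths G" and s: "sc G l = prange x"
    and y: "y \<in> paths G" "y dzero (dg G l) = l" "shift (dg G l) y = x"
  shows "pcat G l x = y"
  unfolding pcat_def by (rule the1_equality[OF pcat_ex1[OF l x s]]) (use y in auto)

lemma pcat_decomp:
  assumes x: "x \<in> paths G"
  shows "pcat G (x dzero d) (shift d x) = x"
proof -
  have d: "dg G (x dzero d) = d" using path_props(4)[OF x, of dzero d] by simp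
  show ?thesis
    by (rule pcat_unique) (use path_props[OF x] shift_path[OF x] d prange_shift[of d x] x in auto)
qed

lemma prange_pcat:
  assumes l: "l \<in> Mor G" and x: "x \<in> paths G" and s: "sc G l = prange x"
  shows "prange (pcat G l x) = rg G l"
  using path_props(5)[OF pcat_props(1)[OF assms], of dzero "dg G l"] pcat_props(2)[OF assms]
  unfolding prange_def by simp

lemma per_all:
  assumes v: "v \<in> vertices G" and h: "\<forall>x\<in>cyl G v. shift m x = shift n x"
  shows "\<forall>x\<in>paths G. shift m x = shift n x"
proof
  fix x assume x: "x \<in> paths G"
  have w: "prange x \<in> vertices G" using path_props(2)[OF x] by (simp add: prange_def)
  obtain l where l: "l \<in> Mor G" "rg G l = v" "sc G l = prange x" using sconn'[OF v w] by blast
  let ?z = "pcat G l x" and ?d = "dg G l"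
  note Z = pcat_props[OF l(1) x l(3)]
  have zc: "?z \<in> cyl G v" using Z(1) prange_pcat[OF l(1) x l(3)] l(2) unfolding cyl_def by simp
  have "shift m x = shift m (shift ?d ?z)" using Z(3) by simp
  also have "\<dots> = shift ?d (shift m ?z)" by (simp add: shift_shift dadd_comm)
  also have "\<dots> = shift ?d (shift n ?z)" using h zc by simp
  also have "\<dots> = shift n (shift ?d ?z)" by (simp add: shift_shift dadd_comm)
  finally show "shift m x = shift n x" using Z(3) by simp
qed

lemma K1:
  assumes per: "\<forall>x\<in>paths G. shift m x = shift n x"
    and y: "y \<in> paths G" and y': "y' \<in> paths G" and r: "prange y = prange y'"
    and e: "y dzero m = y' dzero m"
  shows "y dzero n = y' dzero n"
proof -
  have w: "prange y \<in> vertices G" using path_props(2)[OF y] by (simp add: prange_def)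
  obtain mu where mu: "mu \<in> Mor G" "sc G mu = prange y" "dg G mu = n" using ex_sc[OF w] by blast
  have key: "z dzero n = suf G (cmp G mu (z dzero m)) m" if z: "z \<in> paths G" "prange z = prange y" for z
  proof -
    let ?Z = "pcat G mu z"
    note Z = pcat_props[OF mu(1) z(1)] 
    have Z1: "?Z \<in> paths G" "?Z dzero n = mu" "shift n ?Z = z" using Z mu z by auto
    have Z2: "shift m ?Z = z" using per Z1 by simp
    have a: "?Z dzero (dadd n m) = cmp G (?Z dzero n) (?Z n (dadd n m))"
      using path_props(7)[OF Z1(1), of dzero n "dadd n m"] by simp
    have b: "?Z n (dadd n m) = z dzero m" using Z1(3) shift_app[of n ?Z dzero m] by simp
    have c: "z dzero n = ?Z m (dadd m n)" using Z2 shift_app[of m ?Z dzero n] by simp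
    have "z dzero n = suf G (?Z dzero (dadd m n)) m" using c path_seg(1)[OF Z1(1), of m "dadd m n"] by simp
    then show ?thesis using a b Z1(2) dadd_comm[of m n] by simp
  qed
  show ?thesis using key[OF y] key[OF y' r[symmetric]] e by simp
qed

lemma theta_ex1:
  assumes per: "\<forall>x\<in>paths G. shift m x = shift n x" and mu: "mu \<in> Lam G m"
  shows "\<exists>!nu. nu \<in> Lam G n \<and>
          (\<forall>x\<in>cyl G (sc G mu). sc G nu = prange x \<and> pcat G mu x = pcat G nu x)"
proof -
  have muM: "mu \<in> Mor G" "dg G mu = m" using mu by (auto simp: Lam_def)
  obtain x0 where x0: "x0 \<in> cyl G (sc G mu)" using cyl_ne[OF vert_rg(2)[OF muM(1)]] by blast
  have x0': "x0 \<in> paths G" "sc G mu = prange x0" using x0 by (auto simp: cyl_def)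
  let ?y0 = "pcat G mu x0"
  note Y0 = pcat_props[OF muM(1) x0']
  define nu0 where "nu0 = ?y0 dzero n"
  have nuL: "nu0 \<in> Lam G n" unfolding nu0_def Lam_def using path_props(3,4)[OF Y0(1), of dzero n] by simp
  have good: "sc G nu0 = prange x \<and> pcat G mu x = pcat G nu0 x" if x: "x \<in> cyl G (sc G mu)" for x
  proof -
    have x': "x \<in> paths G" "sc G mu = prange x" using x by (auto simp: cyl_def)
    let ?y = "pcat G mu x"
    note Y = pcat_props[OF muM(1) x']
    have "?y dzero n = nu0" unfolding nu0_def
      by (rule K1[OF per Y(1) Y0(1)]) (use prange_pcat[OF muM(1) x'] prange_pcat[OF muM(1) x0'] Y Y0 muM in auto)
    moreover have sn: "shift n ?y = x" using per Y muM by auto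
    ultimately have "pcat G nu0 x = ?y" using pcat_decomp[OF Y(1), of n] by simp
    moreover have "sc G nu0 = prange x"
      using path_props(6)[OF Y(1), of dzero n] \<open>?y dzero n = nu0\<close> prange_shift[of n ?y] sn by simp
    ultimately show ?thesis by simp
  qed
  show ?thesis
  proof (rule ex1I[of _ nu0])
    show "nu0 \<in> Lam G n \<and> (\<forall>x\<in>cyl G (sc G mu). sc G nu0 = prange x \<and> pcat G mu x = pcat G nu0 x)"
      using nuL good by blast
  next
    fix nu assume nu: "nu \<in> Lam G n \<and> (\<forall>x\<in>cyl G (sc G mu). sc G nu = prange x \<and> pcat G mu x = pcat G nu x)"
    have a: "pcat G nu x0 = pcat G nu0 x0" using nu good[OF x0] x0 by auto
    have nuM: "nu \<in> Mor G" "dg G nu = n" "sc G nu = prange x0" using nu x0 by (auto simp: Lam_def)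
    have nu0M: "nu0 \<in> Mor G" "dg G nu0 = n" "sc G nu0 = prange x0" using nuL good[OF x0] by (auto simp: Lam_def)
    show "nu = nu0" using pcat_props(2)[OF nuM(1) x0'(1) nuM(3)] pcat_props(2)[OF nu0M(1) x0'(1) nu0M(3)] a nuM nu0M
      by metis
  qed
qed

lemma theta_props:
  assumes per: "\<forall>x\<in>paths G. shift m x = shift n x" and mu: "mu \<in> Lam G m"
  shows "theta G m n mu \<in> Lam G n"
    "\<forall>x\<in>cyl G (sc G mu). sc G (theta G m n mu) = prange x \<and> pcat G mu x = pcat G (theta G m n mu) x"
proof -
  have h: "theta G m n mu \<in> Lam G n \<and>
    (\<forall>x\<in>cyl G (sc G mu). sc G (theta G m n mu) = prange x \<and> pcat G mu x = pcat G (theta G m n mu) x)"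
    unfolding theta_def by (rule theI'[OF theta_ex1[OF assms]])
  then show "theta G m n mu \<in> Lam G n"
    "\<forall>x\<in>cyl G (sc G mu). sc G (theta G m n mu) = prange x \<and> pcat G mu x = pcat G (theta G m n mu) x"
    by auto
qed

lemma theta_eq:
  assumes per: "\<forall>x\<in>paths G. shift m x = shift n x" and mu: "mu \<in> Lam G m"
    and nu: "nu \<in> Lam G n" "\<forall>x\<in>cyl G (sc G mu). sc G nu = prange x \<and> pcat G mu x = pcat G nu x"
  shows "theta G m n mu = nu"
  unfolding theta_def by (rule the1_equality[OF theta_ex1[OF assms(1,2)]]) (use nu in auto)

lemma theta_rs:
  assumes per: "\<forall>x\<in>paths G. shift m x = shift n x" and mu: "mu \<in> Lam G m"
  shows "rg G (theta G m n mu) = rg G mu" "sc G (theta G m n mu) = sc G mu"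
proof -
  note T = theta_props[OF assms]
  have muM: "mu \<in> Mor G" using mu by (auto simp: Lam_def)
  have tM: "theta G m n mu \<in> Mor G" using T(1) by (auto simp: Lam_def)
  obtain x0 where x0: "x0 \<in> cyl G (sc G mu)" using cyl_ne[OF vert_rg(2)[OF muM]] by blast
  have x0': "x0 \<in> paths G" "sc G mu = prange x0" using x0 by (auto simp: cyl_def)
  have s: "sc G (theta G m n mu) = prange x0" and e: "pcat G mu x0 = pcat G (theta G m n mu) x0"
    using T(2) x0 by auto
  show "sc G (theta G m n mu) = sc G mu" using s x0' by simp
  show "rg G (theta G m n mu) = rg G mu"
    using prange_pcat[OF muM x0'] prange_pcat[OF tM x0'(1) s] e by simp
qed

lemma theta_id:
  assumes mu: "mu \<in> Lam G q" shows "theta G q q mu = mu"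
  by (rule theta_eq) (use mu in \<open>auto simp: cyl_def\<close>)

lemma theta_comp:
  assumes p1: "\<forall>x\<in>paths G. shift m x = shift n x" and p2: "\<forall>x\<in>paths G. shift n x = shift p x"
    and mu: "mu \<in> Lam G m"
  shows "theta G n p (theta G m n mu) = theta G m p mu"
proof -
  have p3: "\<forall>x\<in>paths G. shift m x = shift p x" using p1 p2 by simp
  let ?nu = "theta G m n mu"
  have nuL: "?nu \<in> Lam G n" and nuP: "\<forall>x\<in>cyl G (sc G mu). sc G ?nu = prange x \<and> pcat G mu x = pcat G ?nu x"
    using theta_props[OF p1 mu] by auto
  have snu: "sc G ?nu = sc G mu" using theta_rs[OF p1 mu] by simp
  let ?rho = "theta G n p ?nu"
  have rL: "?rho \<in> Lam G p" and rP: "\<forall>x\<in>cyl G (sc G ?nu). sc G ?rho = prange x \<and> pcat G ?nu x = pcat G ?rho x"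
    using theta_props[OF p2 nuL] by auto
  show ?thesis
    by (rule sym, rule theta_eq[OF p3 mu rL]) (use nuP rP snu in auto)
qed

end

theorem lemma5p1:
  fixes G :: "('a, 'k::finite) kgraph" and v :: 'a and m n :: "'k \<Rightarrow> nat"
  assumes "kgraph G" and "finite_kgraph G" and "strongly_connected G"
    and "v \<in> vertices G"
    and "\<forall>x\<in>cyl G v. shift m x = shift n x"
  shows "(\<forall>x\<in>paths G. shift m x = shift n x)
    \<and> (\<forall>mu\<in>Lam G m. \<exists>!nu. nu \<in> Lam G n \<and>
          (\<forall>x\<in>cyl G (sc G mu). sc G nu = prange x \<and> pcat G mu x = pcat G nu x))
    \<and> (\<forall>mu\<in>Lam G m. theta G m n mu \<in> Lam G n \<and>
          rg G (theta G m n mu) = rg G mu \<and> sc G (theta G m n mu) = sc G mu)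
    \<and> (\<forall>w p. w \<in> vertices G \<and> (\<forall>x\<in>cyl G w. shift n x = shift p x) \<longrightarrow>
          (\<forall>x\<in>paths G. shift m x = shift p x) \<and>
          (\<forall>mu\<in>Lam G m. theta G n p (theta G m n mu) = theta G m p mu))
    \<and> (\<forall>q. \<forall>mu\<in>Lam G q. theta G q q mu = mu)
    \<and> bij_betw (theta G m n) (Lam G m) (Lam G n)
    \<and> (\<forall>mu\<in>Lam G m. theta G n m (theta G m n mu) = mu)
    \<and> (\<forall>nu\<in>Lam G n. theta G m n (theta G n m nu) = nu)"
proof -
  interpret KG G using assms(1,3) by unfold_locales
  have per: "\<forall>x\<in>paths G. shift m x = shift n x" by (rule per_all[OF assms(4,5)])
  have per': "\<forall>x\<in>paths G. shift n x = shift m x" using per by simp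
  have A2: "\<forall>mu\<in>Lam G m. \<exists>!nu. nu \<in> Lam G n \<and>
          (\<forall>x\<in>cyl G (sc G mu). sc G nu = prange x \<and> pcat G mu x = pcat G nu x)"
    using theta_ex1[OF per] by blast
  have A3: "\<forall>mu\<in>Lam G m. theta G m n mu \<in> Lam G n \<and>
          rg G (theta G m n mu) = rg G mu \<and> sc G (theta G m n mu) = sc G mu"
    using theta_props(1)[OF per] theta_rs[OF per] by blast
  have A4: "\<forall>w p. w \<in> vertices G \<and> (\<forall>x\<in>cyl G w. shift n x = shift p x) \<longrightarrow>
          (\<forall>x\<in>paths G. shift m x = shift p x) \<and>
          (\<forall>mu\<in>Lam G m. theta G n p (theta G m n mu) = theta G m p mu)"
  proof (intro allI impI)
    fix w p assume h: "w \<in> vertices G \<and> (\<forall>x\<in>cyl G w. shift n x = shift p x)"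
    have pp: "\<forall>x\<in>paths G. shift n x = shift p x" using per_all[of w n p] h by blast
    show "(\<forall>x\<in>paths G. shift m x = shift p x) \<and>
          (\<forall>mu\<in>Lam G m. theta G n p (theta G m n mu) = theta G m p mu)"
      using per pp theta_comp[OF per pp] by simp
  qed
  have A5: "\<forall>q. \<forall>mu\<in>Lam G q. theta G q q mu = mu" using theta_id by blast
  have inv1: "\<forall>mu\<in>Lam G m. theta G n m (theta G m n mu) = mu"
    using theta_comp[OF per per'] theta_id by simp
  have inv2: "\<forall>nu\<in>Lam G n. theta G m n (theta G n m nu) = nu"
    using theta_comp[OF per' per] theta_id by simp
  have bij: "bij_betw (theta G m n) (Lam G m) (Lam G n)"
    by (rule bij_betw_byWitness[OF inv1 inv2]) (use theta_props(1)[OF per] theta_props(1)[OF per'] in auto)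
  show ?thesis using per A2 A3 A4 A5 bij inv1 inv2 by blast
qed

end
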